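(* Let $\omega\colon\mathbf Z_+\to(0,+\infty)$ be a weight which is bounded from below, such that $\omega(k2^n)\to+\infty$ as $n\to+\infty$ for every $k\ge3$, and such that $\mathcal T$ is a bounded operator on $\mathcal X_\omega$. Then $\mathcal T$ is hypercyclic on $\mathcal X_\omega$, i.e. there exists $f\in\mathcal X_\omega$ whose orbit $\{\mathcal T^nf;\ n\ge0\}$ is dense in $\mathcal X_\omega$. In particular, $\mathcal T$ is hypercyclic on $\mathcal X_{\omega_0}$, where $\omega_0(n)=(n+1)/\pi$.
   Context: $T\colon\mathbf Z_+\to\mathbf Z_+$ is the modified Collatz map: $T(n)=n/2$ for $n$ even, $T(n)=(3n+1)/2$ for $n$ odd. $\mathcal X_\omega$ is the Hilbert space of holomorphic functions $f(z)=\sum_{n\ge3}c_nz^n$ on the unit disk with $\|f\|_\omega^2=\sum_{n\ge3}|c_n|^2/\omega(n)<\infty$ (the quotient of the weighted Bergman space $\mathcal B^2_\omega$ by $\mathrm{span}[1,z,z^2]$). $\mathcal T\sum_{n\ge3}c_nz^n=\sum_{j\ge3,\,T(j)\ge3}c_jz^{T(j)}$. $\mathcal T$ is bounded on $\mathcal X_\omega$ iff the sequences $\omega(6m)/\omega(3m)$, $\omega(6m+2)/\omega(3m+1)$, $(\omega(6m+4)+\omega(2m+1))/\omega(3m+2)$ ($m\ge1$) are bounded; this holds for $\omega_0$. *)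

theory Defs
  imports "HOL-Analysis.Analysis"
begin

definition collatz :: "nat \<Rightarrow> nat" where
  "collatz n = (if even n then n div 2 else (3 * n + 1) div 2)"

text \<open>Elements f = sum_{n>=3} c_n z^n of X_omega are represented by their Taylor
  coefficient sequences c (with c n = 0 for n < 3).\<close>
definition Xw :: "(nat \<Rightarrow> real) \<Rightarrow> (nat \<Rightarrow> complex) set" where
  "Xw \<omega> = {c. (\<forall>n<3. c n = 0) \<and> summable (\<lambda>n. (cmod (c n))\<^sup>2 / \<omega> n)}"

definition wnorm :: "(nat \<Rightarrow> real) \<Rightarrow> (nat \<Rightarrow> complex) \<Rightarrow> real" where
  "wnorm \<omega> c = sqrt (\<Sum>n. (cmod (c n))\<^sup>2 / \<omega> n)"

text \<open>The operator: T (sum c_j z^j) = sum_{j>=3, T(j)>=3} c_j z^{T(j)}.\<close>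
definition Top :: "(nat \<Rightarrow> complex) \<Rightarrow> (nat \<Rightarrow> complex)" where
  "Top c m = (if m < 3 then 0 else (\<Sum>j\<in>{j. 3 \<le> j \<and> collatz j = m}. c j))"

definition weight :: "(nat \<Rightarrow> real) \<Rightarrow> bool" where
  "weight \<omega> \<longleftrightarrow> (\<forall>n\<ge>1. \<omega> n > 0)"

definition bounded_below_weight :: "(nat \<Rightarrow> real) \<Rightarrow> bool" where
  "bounded_below_weight \<omega> \<longleftrightarrow> (\<exists>\<delta>>0. \<forall>n\<ge>1. \<delta> \<le> \<omega> n)"

definition Top_bounded :: "(nat \<Rightarrow> real) \<Rightarrow> bool" where
  "Top_bounded \<omega> \<longleftrightarrow> (\<exists>C. \<forall>c\<in>Xw \<omega>. Top c \<in> Xw \<omega>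
      \<and> wnorm \<omega> (Top c) \<le> C * wnorm \<omega> c)"

definition hypercyclic_Top :: "(nat \<Rightarrow> real) \<Rightarrow> bool" where
  "hypercyclic_Top \<omega> \<longleftrightarrow> (\<exists>f\<in>Xw \<omega>. \<forall>g\<in>Xw \<omega>. \<forall>\<epsilon>>0.
      \<exists>n. wnorm \<omega> ((Top ^^ n) f - g) < \<epsilon>)"

definition \<omega>\<^sub>0 :: "nat \<Rightarrow> real" where
  "\<omega>\<^sub>0 n = (real n + 1) / pi"

end

theory Submission
  imports Defs
begin


definition emon :: "nat \<Rightarrow> nat \<Rightarrow> complex" where
  "emon j = (\<lambda>m. if m = j \<and> 3 \<le> j then 1 else 0)"

definition Sop :: "(nat \<Rightarrow> complex) \<Rightarrow> (nat \<Rightarrow> complex)" where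
  "Sop c = (\<lambda>m. if even m then c (m div 2) else 0)"

definition Zlow :: "(nat \<Rightarrow> complex) \<Rightarrow> bool" where
  "Zlow c \<longleftrightarrow> (\<forall>n<3. c n = 0)"

lemma collatz_double[simp]: "collatz (2 * y) = y"
  by (simp add: collatz_def)

lemma funpow_Suc_app: "(f ^^ Suc n) x = (f ^^ n) (f x)"
  by (simp only: funpow_Suc_right comp_apply)

lemma collatz_pow_double: "(collatz ^^ K) (2 ^ K * x) = x"
proof (induction K arbitrary: x)
  case (Suc K)
  have "(collatz ^^ Suc K) (2 ^ Suc K * x) = (collatz ^^ K) (collatz (2 * (2 ^ K * x)))"
    by (simp only: funpow_Suc_app power_Suc mult.assoc)
  also have "\<dots> = x" using Suc by (simp only: collatz_double)
  finally show ?case .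
qed simp

lemma collatz_le: "collatz j = m \<Longrightarrow> j \<le> 2 * m"
  by (auto simp: collatz_def split: if_splits)

lemma collatz_pos: "j \<ge> 1 \<Longrightarrow> collatz j \<ge> 1"
  by (auto simp: collatz_def elim!: oddE)

lemma collatz_pow_pos: "j \<ge> 1 \<Longrightarrow> (collatz ^^ K) j \<ge> 1"
proof (induction K)
  case (Suc K) then show ?case using collatz_pos[of "(collatz ^^ K) j"] by simp
qed simp

lemma collatz_small: "j < 3 \<Longrightarrow> collatz j < 3"
  by (auto simp: collatz_def numeral_3_eq_3 less_Suc_eq)

lemma fin_pre: "finite {i. 3 \<le> i \<and> collatz i = m}"
  by (rule finite_subset[of _ "{..2*m}"]) (auto intro: collatz_le[OF refl])

lemma Top_add: "Top (\<lambda>m. c m + d m) = (\<lambda>m. Top c m + Top d m)"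
  by (auto simp: Top_def sum.distrib)

lemma Top_diff: "Top (\<lambda>m. c m - d m) = (\<lambda>m. Top c m - Top d m)"
  by (auto simp: Top_def sum_subtractf)

lemma Top_scale: "Top (\<lambda>m. r * c m) = (\<lambda>m. r * Top c m)"
  by (auto simp: Top_def sum_distrib_left)

lemma Top_zero: "Top (\<lambda>m. 0) = (\<lambda>m. 0)"
  by (auto simp: Top_def)

lemma Top_sum: "Top (\<lambda>m. \<Sum>i\<in>I. c i m) = (\<lambda>m. \<Sum>i\<in>I. Top (c i) m)"
proof
  fix m
  show "Top (\<lambda>m. \<Sum>i\<in>I. c i m) m = (\<Sum>i\<in>I. Top (c i) m)"
  proof (cases "m < 3")
    case False
    then show ?thesis unfolding Top_def using False by (simp only: if_False sum.swap[of _ _ I])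
  qed (simp add: Top_def)
qed

lemma Topn_add: "(Top ^^ n) (\<lambda>m. c m + d m) = (\<lambda>m. (Top ^^ n) c m + (Top ^^ n) d m)"
  by (induction n) (auto simp: Top_add)

lemma Topn_diff: "(Top ^^ n) (\<lambda>m. c m - d m) = (\<lambda>m. (Top ^^ n) c m - (Top ^^ n) d m)"
  by (induction n) (auto simp: Top_diff)

lemma Topn_scale: "(Top ^^ n) (\<lambda>m. r * c m) = (\<lambda>m. r * (Top ^^ n) c m)"
  by (induction n) (auto simp: Top_scale)

lemma Topn_zero: "(Top ^^ n) (\<lambda>m. 0) = (\<lambda>m. 0)"
  by (induction n) (auto simp: Top_zero)

lemma Topn_sum: "(Top ^^ n) (\<lambda>m. \<Sum>i\<in>I. c i m) = (\<lambda>m. \<Sum>i\<in>I. (Top ^^ n) (c i) m)"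
proof (induction n)
  case (Suc n)
  show ?case using Top_sum[of "\<lambda>i. (Top ^^ n) (c i)" I] by (simp add: Suc)
qed simp

lemma Top_emon: "Top (emon j) = emon (collatz j)"
proof
  fix m
  show "Top (emon j) m = emon (collatz j) m"
  proof (cases "m < 3")
    case True then show ?thesis by (auto simp: Top_def emon_def)
  next
    case False
    have "Top (emon j) m = (\<Sum>i\<in>{i. 3 \<le> i \<and> collatz i = m}. emon j i)"
      using False by (simp add: Top_def)
    also have "\<dots> = (\<Sum>i\<in>{i. 3 \<le> i \<and> collatz i = m} \<inter> {j}. emon j i)"
      by (rule sum.mono_neutral_right) (auto simp: emon_def fin_pre)
    also have "{i. 3 \<le> i \<and> collatz i = m} \<inter> {j} = (if 3 \<le> j \<and> collatz j = m then {j} else {})"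
      by auto
    also have "(\<Sum>i\<in>(if 3 \<le> j \<and> collatz j = m then {j} else {}). emon j i) = emon (collatz j) m"
      using False collatz_small[of j] by (auto simp: emon_def)
    finally show ?thesis .
  qed
qed

lemma Topn_emon: "(Top ^^ K) (emon j) = emon ((collatz ^^ K) j)"
  by (induction K) (auto simp: Top_emon)

lemma Topn_kill: "K \<le> L \<Longrightarrow> (Top ^^ L) (\<lambda>m. emon a m - emon (2 ^ K * (collatz ^^ K) a) m) = (\<lambda>m. 0)"
proof -
  assume "K \<le> L"
  then obtain D where L: "L = D + K" by (metis le_add_diff_inverse2)
  have "(Top ^^ K) (\<lambda>m. emon a m - emon (2 ^ K * (collatz ^^ K) a) m) = (\<lambda>m. 0)"
    by (simp add: Topn_diff Topn_emon collatz_pow_double)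
  then show ?thesis by (simp add: L funpow_add Topn_zero)
qed

lemma Top_low: "m < 3 \<Longrightarrow> Top c m = 0"
  by (simp add: Top_def)

lemma Sop_pow: "(Sop ^^ d) c m = (if 2 ^ d dvd m then c (m div 2 ^ d) else 0)"
proof (induction d arbitrary: m)
  case (Suc d)
  have e: "(Sop ^^ Suc d) c m = (if even m then (Sop ^^ d) c (m div 2) else 0)"
    by (simp add: Sop_def)
  show ?case
  proof (cases "even m")
    case True
    then obtain k where k: "m = 2 * k" by (elim evenE)
    have "(2::nat) ^ Suc d dvd m \<longleftrightarrow> 2 ^ d dvd k" by (simp add: k)
    moreover have "m div 2 ^ Suc d = k div 2 ^ d" by (simp add: k)
    ultimately show ?thesis using e Suc.IH[of k] by (simp add: k)
  next
    case False
    have "\<not> (2::nat) ^ Suc d dvd m"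
    proof
      assume "(2::nat) ^ Suc d dvd m"
      then have "2 dvd m" by (simp add: dvd_mult_left)
      then show False using False by simp
    qed
    then show ?thesis using e False by simp
  qed
qed simp

lemma Top_Sop: assumes "Zlow c" shows "Top (Sop c) = c"
proof
  fix m
  show "Top (Sop c) m = c m"
  proof (cases "m < 3")
    case True then show ?thesis using assms by (simp add: Top_def Zlow_def)
  next
    case False
    have "Top (Sop c) m = (\<Sum>i\<in>{i. 3 \<le> i \<and> collatz i = m}. Sop c i)"
      using False by (simp add: Top_def)
    also have "\<dots> = (\<Sum>i\<in>{2*m}. Sop c i)"
    proof (rule sum.mono_neutral_right)
      show "finite {i. 3 \<le> i \<and> collatz i = m}" by (rule fin_pre)
      show "{2 * m} \<subseteq> {i. 3 \<le> i \<and> collatz i = m}" using False by simp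
      show "\<forall>i\<in>{i. 3 \<le> i \<and> collatz i = m} - {2 * m}. Sop c i = 0"
      proof
        fix i assume i: "i \<in> {i. 3 \<le> i \<and> collatz i = m} - {2 * m}"
        have "odd i"
        proof
          assume "even i"
          then obtain k where "i = 2 * k" by (elim evenE)
          then show False using i by simp
        qed
        then show "Sop c i = 0" by (simp add: Sop_def)
      qed
    qed
    also have "\<dots> = c m" by (simp add: Sop_def)
    finally show ?thesis .
  qed
qed

lemma Zlow_Sop: "Zlow c \<Longrightarrow> Zlow (Sop c)"
  by (auto simp: Zlow_def Sop_def)

lemma Zlow_Sop_pow: "Zlow c \<Longrightarrow> Zlow ((Sop ^^ d) c)"
  by (induction d) (auto simp: Zlow_Sop)

lemma Top_Sop_pow: "Zlow c \<Longrightarrow> (Top ^^ d) ((Sop ^^ d) c) = c"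
proof (induction d arbitrary: c)
  case (Suc d)
  have "(Top ^^ Suc d) ((Sop ^^ Suc d) c) = (Top ^^ d) (Top ((Sop ^^ Suc d) c))"
    by (simp only: funpow_Suc_app)
  also have "\<dots> = (Top ^^ d) (Top (Sop ((Sop ^^ d) c)))" by simp
  also have "\<dots> = c" using Suc by (simp add: Top_Sop Zlow_Sop_pow)
  finally show ?case .
qed simp

lemma Topn_Sopn_ge: assumes "Zlow c" "d \<le> n" shows "(Top ^^ n) ((Sop ^^ d) c) = (Top ^^ (n - d)) c"
proof -
  have n: "n = (n - d) + d" using assms(2) by simp
  have "(Top ^^ n) ((Sop ^^ d) c) = (Top ^^ (n - d)) ((Top ^^ d) ((Sop ^^ d) c))"
    by (subst n) (simp only: funpow_add comp_apply)
  also have "\<dots> = (Top ^^ (n - d)) c" using Top_Sop_pow[OF assms(1)] by simp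
  finally show ?thesis .
qed

lemma Topn_Sopn_le: assumes "Zlow c" "n \<le> d" shows "(Top ^^ n) ((Sop ^^ d) c) = (Sop ^^ (d - n)) c"
proof -
  have d: "d = n + (d - n)" using assms(2) by simp
  have "(Top ^^ n) ((Sop ^^ d) c) = (Top ^^ n) ((Sop ^^ n) ((Sop ^^ (d - n)) c))"
    by (subst d) (simp only: funpow_add comp_apply)
  also have "\<dots> = (Sop ^^ (d - n)) c" using Top_Sop_pow[OF Zlow_Sop_pow[OF assms(1)]] by simp
  finally show ?thesis .
qed

lemma Topn_local:
  "(\<And>j. j \<le> 2 ^ n * m \<Longrightarrow> c j = d j) \<Longrightarrow> (Top ^^ n) c m = (Top ^^ n) d m"
proof (induction n arbitrary: m c d)
  case 0 then show ?case by simp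
next
  case (Suc n)
  have "(Top ^^ Suc n) c m = (Top ^^ n) (Top c) m" by (simp only: funpow_Suc_app)
  also have "\<dots> = (Top ^^ n) (Top d) m"
  proof (rule Suc.IH)
    fix j assume j: "j \<le> 2 ^ n * m"
    show "Top c j = Top d j"
      unfolding Top_def
    proof (intro if_cong refl sum.cong)
      fix i assume "i \<in> {i. 3 \<le> i \<and> collatz i = j}"
      then have "i \<le> 2 * j" using collatz_le by auto
      also have "\<dots> \<le> 2 ^ Suc n * m" using j by simp
      finally show "c i = d i" using Suc.prems by blast
    qed
  qed
  also have "\<dots> = (Top ^^ Suc n) d m" by (simp only: funpow_Suc_app)
  finally show ?case .
qed



definition qs :: "(nat \<Rightarrow> real) \<Rightarrow> (nat \<Rightarrow> complex) \<Rightarrow> nat \<Rightarrow> real" where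
  "qs \<omega> c = (\<lambda>n. (cmod (c n))\<^sup>2 / \<omega> n)"

definition QI :: "complex \<Rightarrow> bool" where
  "QI z \<longleftrightarrow> Re z \<in> \<rat> \<and> Im z \<in> \<rat>"

lemma QI_mult: "QI z \<Longrightarrow> QI w \<Longrightarrow> QI (z * w)"
  by (auto simp: QI_def)

lemma QI_sum: "(\<And>x. x \<in> A \<Longrightarrow> QI (f x)) \<Longrightarrow> QI (sum f A)"
  by (auto simp: QI_def Im_sum intro!: Rats_sum)

lemma QI_div_nat: "QI z \<Longrightarrow> QI (z / of_nat P)"
  by (auto simp: QI_def Re_divide Im_divide)

lemma QI_emon_diff: "QI (emon a m - emon b m)"
  by (auto simp: QI_def emon_def)

lemma sum_emon:
  assumes "finite A" "A \<subseteq> {3..}"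
  shows "(\<Sum>a\<in>A. c a * emon a m) = (if m \<in> A then c m else 0)"
proof -
  have "(\<Sum>a\<in>A. c a * emon a m) = (\<Sum>a\<in>A. if a = m then c a else 0)"
    by (rule sum.cong) (use assms in \<open>auto simp: emon_def\<close>)
  also have "\<dots> = (if m \<in> A then c m else 0)" using assms by (simp add: sum.delta')
  finally show ?thesis .
qed

lemma sum_emon1:
  assumes "finite A" "A \<subseteq> {3..}"
  shows "(\<Sum>a\<in>A. emon a m) = (if m \<in> A then 1 else 0)"
  using sum_emon[OF assms, of "\<lambda>_. 1" m] by simp

lemma QI_approx: assumes "\<epsilon> > 0" shows "\<exists>q. QI q \<and> cmod (q - z) < \<epsilon>"
proof -
  obtain r where r: "r \<in> \<rat>" "Re z < r" "r < Re z + \<epsilon>/2"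
    using Rats_dense_in_real[of "Re z" "Re z + \<epsilon>/2"] assms by auto
  obtain s where s: "s \<in> \<rat>" "Im z < s" "s < Im z + \<epsilon>/2"
    using Rats_dense_in_real[of "Im z" "Im z + \<epsilon>/2"] assms by auto
  have "cmod (Complex r s - z) \<le> \<bar>Re (Complex r s - z)\<bar> + \<bar>Im (Complex r s - z)\<bar>"
    by (rule cmod_le)
  also have "\<dots> < \<epsilon>" using r s by simp
  finally show ?thesis using r s by (intro exI[of _ "Complex r s"]) (auto simp: QI_def)
qed

lemma cmp_sum:
  fixes f g :: "nat \<Rightarrow> real"
  assumes "\<And>n. 0 \<le> f n" "\<And>n. f n \<le> g n" "summable g"
  shows "summable f" "suminf f \<le> suminf g"
proof -
  show sf: "summable f"
    by (rule summable_comparison_test'[of g 0]) (use assms in auto)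
  show "suminf f \<le> suminf g" by (rule suminf_le) (use assms sf in auto)
qed

lemma cmod_sum_sq: "(cmod (\<Sum>a\<in>A. x a))\<^sup>2 \<le> real (card A) * (\<Sum>a\<in>A. (cmod (x a))\<^sup>2)"
proof -
  have "cmod (\<Sum>a\<in>A. x a) \<le> (\<Sum>a\<in>A. 1 * cmod (x a))" using norm_sum[of x A] by simp
  then have "(cmod (\<Sum>a\<in>A. x a))\<^sup>2 \<le> (\<Sum>a\<in>A. 1 * cmod (x a))\<^sup>2"
    by (rule power_mono) simp
  also have "\<dots> \<le> (\<Sum>a\<in>A. 1\<^sup>2) * (\<Sum>a\<in>A. (cmod (x a))\<^sup>2)"
    by (rule Cauchy_Schwarz_ineq_sum)
  finally show ?thesis by simp
qed

lemma sq3: "((a::real) + b + c)\<^sup>2 \<le> 3 * (a\<^sup>2 + b\<^sup>2 + c\<^sup>2)"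
proof -
  have "3 * (a\<^sup>2 + b\<^sup>2 + c\<^sup>2) - (a + b + c)\<^sup>2 = (a - b)\<^sup>2 + (b - c)\<^sup>2 + (a - c)\<^sup>2"
    by (simp add: power2_eq_square algebra_simps)
  moreover have "0 \<le> (a - b)\<^sup>2 + (b - c)\<^sup>2 + (a - c)\<^sup>2" by simp
  ultimately show ?thesis by linarith
qed

lemma cmod3: "(cmod (x + y - z))\<^sup>2 \<le> 3 * ((cmod x)\<^sup>2 + (cmod y)\<^sup>2 + (cmod z)\<^sup>2)"
proof -
  have "cmod (x + y - z) \<le> cmod (x + y) + cmod z" by (rule norm_triangle_ineq4)
  also have "\<dots> \<le> cmod x + cmod y + cmod z" using norm_triangle_ineq[of x y] by simp
  finally have "(cmod (x + y - z))\<^sup>2 \<le> (cmod x + cmod y + cmod z)\<^sup>2"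
    by (rule power_mono) simp
  also have "\<dots> \<le> 3 * ((cmod x)\<^sup>2 + (cmod y)\<^sup>2 + (cmod z)\<^sup>2)" by (rule sq3)
  finally show ?thesis .
qed

lemma cmod2: "(cmod (x + y))\<^sup>2 \<le> 2 * ((cmod x)\<^sup>2 + (cmod y)\<^sup>2)"
proof -
  have "cmod (x + y) \<le> cmod x + cmod y" by (rule norm_triangle_ineq)
  then have "(cmod (x + y))\<^sup>2 \<le> (cmod x + cmod y)\<^sup>2"
    by (rule power_mono) simp
  also have "\<dots> \<le> 2 * ((cmod x)\<^sup>2 + (cmod y)\<^sup>2)"
  proof -
    have "2 * ((cmod x)\<^sup>2 + (cmod y)\<^sup>2) - (cmod x + cmod y)\<^sup>2 = (cmod x - cmod y)\<^sup>2"
      by (simp add: power2_eq_square algebra_simps)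
    moreover have "0 \<le> (cmod x - cmod y)\<^sup>2" by simp
    ultimately show ?thesis by linarith
  qed
  finally show ?thesis .
qed

locale wt =
  fixes \<omega> :: "nat \<Rightarrow> real" and \<delta> :: real
  assumes pos: "\<And>n. n \<ge> 1 \<Longrightarrow> \<omega> n > 0"
    and dpos: "\<delta> > 0"
    and dle: "\<And>n. n \<ge> 1 \<Longrightarrow> \<delta> \<le> \<omega> n"
begin

lemma qs_nonneg: "c 0 = 0 \<Longrightarrow> 0 \<le> qs \<omega> c n"
  using pos[of n] by (cases "n = 0") (auto simp: qs_def)

lemma fin_supp:
  assumes "finite U" "\<And>m. m \<notin> U \<Longrightarrow> c m = 0"
  shows "summable (qs \<omega> c)" "suminf (qs \<omega> c) = (\<Sum>m\<in>U. qs \<omega> c m)"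
proof -
  have z: "\<And>m. m \<notin> U \<Longrightarrow> qs \<omega> c m = 0" using assms by (simp add: qs_def)
  show "summable (qs \<omega> c)" by (rule summable_finite[OF assms(1) z])
  show "suminf (qs \<omega> c) = (\<Sum>m\<in>U. qs \<omega> c m)" by (rule suminf_finite[OF assms(1) z])
qed


end



context wt begin

lemma dens:
  assumes g: "g \<in> Xw \<omega>" and eta: "\<eta> > 0"
  shows "\<exists>y. Zlow y \<and> (\<exists>B. \<forall>m\<ge>B. y m = 0) \<and> (\<exists>N. (Top ^^ N) y = (\<lambda>m. 0)) \<and> (\<forall>m. QI (y m))
     \<and> summable (qs \<omega> (\<lambda>m. y m - g m)) \<and> suminf (qs \<omega> (\<lambda>m. y m - g m)) < \<eta>"
proof -
  from g have gz: "\<And>n. n < 3 \<Longrightarrow> g n = 0" and gs: "summable (qs \<omega> g)"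
    by (auto simp: Xw_def qs_def)
  have "(\<lambda>M. \<Sum>n<M. qs \<omega> g n) \<longlonglongrightarrow> suminf (qs \<omega> g)" using summable_LIMSEQ[OF gs] .
  then have "\<forall>\<^sub>F M in sequentially. suminf (qs \<omega> g) - \<eta>/9 < (\<Sum>n<M. qs \<omega> g n)"
    by (rule order_tendstoD) (use eta in simp)
  then obtain M where M0: "\<forall>n\<ge>M. suminf (qs \<omega> g) - \<eta>/9 < (\<Sum>n<n. qs \<omega> g n)"
    unfolding eventually_sequentially by blast
  then have "suminf (qs \<omega> g) - \<eta>/9 < (\<Sum>n<M. qs \<omega> g n)" by blast
  then have M: "suminf (qs \<omega> g) - (\<Sum>n<M. qs \<omega> g n) < \<eta>/9" by linarith
  define t where "t = (\<lambda>n. if n < M then 0 else qs \<omega> g n)"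
  have fs: "summable (\<lambda>n. if n < M then qs \<omega> g n else 0)"
    by (rule summable_finite[of "{..<M}"]) auto
  have fsum: "suminf (\<lambda>n. if n < M then qs \<omega> g n else 0) = (\<Sum>n<M. qs \<omega> g n)"
    by (subst suminf_finite[of "{..<M}"]) auto
  have t_eq: "t = (\<lambda>n. qs \<omega> g n - (if n < M then qs \<omega> g n else 0))"
    by (auto simp: t_def)
  have ts: "summable t" unfolding t_eq using gs fs by (rule summable_diff)
  have tsum: "suminf t < \<eta>/9"
    unfolding t_eq using suminf_diff[OF gs fs] fsum M by simp
  have tnn: "\<And>n. 0 \<le> t n" using qs_nonneg[of g] gz by (auto simp: t_def)

  define A where "A = {3..<M}"
  have Afin: "finite A" and A3: "A \<subseteq> {3..}" and cardA: "card A \<le> M" by (auto simp: A_def)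
  define \<epsilon>1 where "\<epsilon>1 = \<eta> * \<delta> / (9 * (real M + 1))"
  have e1: "\<epsilon>1 > 0" using eta dpos by (simp add: \<epsilon>1_def)
  have "\<forall>a. \<exists>q. QI q \<and> cmod (q - g a) < sqrt \<epsilon>1" using QI_approx e1 by simp
  then have "\<exists>q. \<forall>a. QI (q a) \<and> cmod (q a - g a) < sqrt \<epsilon>1" by (rule choice)
  then obtain q where q0: "\<forall>a. QI (q a) \<and> cmod (q a - g a) < sqrt \<epsilon>1" by (elim exE)
  have qQ: "\<And>a. QI (q a)" and qa: "\<And>a. cmod (q a - g a) < sqrt \<epsilon>1" using q0 by auto
  have q2: "(cmod (q a - g a))\<^sup>2 \<le> \<epsilon>1" for a
  proof -
    have "(cmod (q a - g a))\<^sup>2 \<le> (sqrt \<epsilon>1)\<^sup>2" using qa[of a] by (intro power_mono) auto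
    then show ?thesis using e1 by simp
  qed
  define C where "C = real (card A) * (\<Sum>a\<in>A. (cmod (q a))\<^sup>2) / \<delta>"
  have C0: "C \<ge> 0" using dpos by (simp add: C_def sum_nonneg)
  obtain n0 :: nat where n0: "9 * C / \<eta> < real n0" using reals_Archimedean2 by blast
  define P where "P = Suc n0"
  have P1: "P \<ge> 1" by (simp add: P_def)
  have PC: "C / real P < \<eta>/9"
  proof -
    have "9 * C < \<eta> * real P" using n0 eta by (simp add: P_def field_simps)
    then show ?thesis using P1 eta by (simp add: field_simps)
  qed

  define h where "h a K = 2 ^ K * (collatz ^^ K) a" for a K :: nat
  have inf: "infinite (range (h a) \<inter> {3..})" if "a \<in> A" for a
    unfolding infinite_nat_iff_unbounded_le
  proof
    fix m
    have a1: "(collatz ^^ (m+3)) a \<ge> 1" using that collatz_pow_pos[of a] by (auto simp: A_def)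
    have "m + 3 < 2 ^ (m+3)" by (rule less_exp)
    also have "\<dots> \<le> h a (m+3)" using a1 by (simp add: h_def)
    finally show "\<exists>n\<ge>m. n \<in> range (h a) \<inter> {3..}" by (intro exI[of _ "h a (m+3)"]) auto
  qed
  have "\<forall>a\<in>A. \<exists>B. finite B \<and> card B = P \<and> B \<subseteq> range (h a) \<inter> {3..}"
    by (intro ballI infinite_arbitrarily_large inf)
  then have "\<exists>F. \<forall>a\<in>A. finite (F a) \<and> card (F a) = P \<and> F a \<subseteq> range (h a) \<inter> {3..}"
    by (rule bchoice)
  then obtain F where F0: "\<forall>a\<in>A. finite (F a) \<and> card (F a) = P \<and> F a \<subseteq> range (h a) \<inter> {3..}"
    by (elim exE)
  have F: "finite (F a) \<and> card (F a) = P \<and> F a \<subseteq> range (h a) \<inter> {3..}" if "a \<in> A" for a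
    using F0 that by (rule bspec)
  define Kb where "Kb a b = (SOME K. b = h a K)" for a b
  have Kb: "b = h a (Kb a b)" if "a \<in> A" "b \<in> F a" for a b
  proof -
    have "\<exists>K. b = h a K" using F[OF that(1)] that(2) by auto
    then show ?thesis unfolding Kb_def by (rule someI_ex)
  qed
  define N where "N = (\<Sum>a\<in>A. \<Sum>b\<in>F a. Kb a b)"
  have KN: "Kb a b \<le> N" if "a \<in> A" "b \<in> F a" for a b
  proof -
    have "Kb a b \<le> (\<Sum>b\<in>F a. Kb a b)" using F[OF that(1)] that(2) by (intro member_le_sum) auto
    also have "\<dots> \<le> N" unfolding N_def using Afin that(1) by (intro member_le_sum) auto
    finally show ?thesis .
  qed
  define y where "y = (\<lambda>m. \<Sum>a\<in>A. \<Sum>b\<in>F a. (q a / of_nat P) * (emon a m - emon b m))"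

  have yZ: "Zlow y" unfolding Zlow_def y_def emon_def by (auto intro!: sum.neutral)
  define U where "U = A \<union> (\<Union>a\<in>A. F a)"
  have Ufin: "finite U" using Afin F by (auto simp: U_def)
  then obtain B where B: "U \<subseteq> {..<B}" using finite_nat_bounded by blast
  have ysupp: "\<forall>m\<ge>B. y m = 0"
  proof (intro allI impI)
    fix m assume m: "m \<ge> B"
    show "y m = 0" unfolding y_def
    proof (intro sum.neutral ballI)
      fix a b assume ab: "a \<in> A" "b \<in> F a"
      then have "a < B" "b < B" using B by (auto simp: U_def)
      then show "q a / of_nat P * (emon a m - emon b m) = 0" using m by (auto simp: emon_def)
    qed
  qed
  have ykill: "(Top ^^ N) y = (\<lambda>m. 0)"
  proof -
    have "(Top ^^ N) y = (\<lambda>m. \<Sum>a\<in>A. \<Sum>b\<in>F a. (q a / of_nat P) * (Top ^^ N) (\<lambda>m. emon a m - emon b m) m)"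
      unfolding y_def by (simp only: Topn_sum Topn_scale)
    also have "\<dots> = (\<lambda>m. 0)"
    proof (intro ext sum.neutral ballI)
      fix m a b assume ab: "a \<in> A" "b \<in> F a"
      have "(Top ^^ N) (\<lambda>m. emon a m - emon b m) = (\<lambda>m. 0)"
        using Topn_kill[OF KN[OF ab], of a] Kb[OF ab] by (simp add: h_def)
      then show "q a / of_nat P * (Top ^^ N) (\<lambda>m. emon a m - emon b m) m = 0" by simp
    qed
    finally show ?thesis .
  qed
  have yQ: "\<forall>m. QI (y m)"
    unfolding y_def by (intro allI QI_sum QI_mult QI_div_nat qQ QI_emon_diff)

  define gM where "gM = (\<lambda>m. if m < M then g m else 0)"
  define D2 where "D2 = (\<lambda>m. \<Sum>a\<in>A. (q a - g a) * emon a m)"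
  define ind where "ind a m = (if m \<in> F a then 1 else 0 :: complex)" for a m
  define D3 where "D3 = (\<lambda>m. \<Sum>a\<in>A. (q a / of_nat P) * ind a m)"
  have D2_eq: "D2 m = (if m \<in> A then q m - g m else 0)" for m
    unfolding D2_def using sum_emon[OF Afin A3] .
  have ind_eq: "(\<Sum>b\<in>F a. emon b m) = ind a m" if "a \<in> A" for a m
    unfolding ind_def using sum_emon1[of "F a" m] F[OF that] by auto
  have yid: "y m - g m = (gM m - g m) + D2 m - D3 m" for m
  proof -
    have "y m = (\<Sum>a\<in>A. (q a / of_nat P) * (of_nat P * emon a m - ind a m))"
      unfolding y_def
    proof (rule sum.cong[OF refl])
      fix a assume a: "a \<in> A"
      have "(\<Sum>b\<in>F a. q a / of_nat P * (emon a m - emon b m))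
          = q a / of_nat P * (of_nat (card (F a)) * emon a m - (\<Sum>b\<in>F a. emon b m))"
        by (simp only: sum_distrib_left[symmetric] sum_subtractf sum_constant)
      then show "(\<Sum>b\<in>F a. q a / of_nat P * (emon a m - emon b m))
          = q a / of_nat P * (of_nat P * emon a m - ind a m)"
        using F[OF a] ind_eq[OF a] by simp
    qed
    also have "\<dots> = (\<Sum>a\<in>A. q a * emon a m) - D3 m"
      using P1 by (simp add: D3_def sum_subtractf[symmetric] right_diff_distrib) 
    also have "(\<Sum>a\<in>A. q a * emon a m) = (if m \<in> A then q m else 0)"
      using sum_emon[OF Afin A3] .
    finally show ?thesis
      using gz[of m] by (auto simp: gM_def D2_eq A_def)
  qed
  define d2 where "d2 = (\<lambda>m. if m \<in> A then \<epsilon>1 / \<delta> else 0)"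
  define d3 where "d3 = (\<lambda>m. real (card A) * (\<Sum>a\<in>A. (cmod (q a))\<^sup>2 / (real P)\<^sup>2 * (if m \<in> F a then 1 else 0)) / \<delta>)"
  have d2nn: "0 \<le> d2 m" for m using e1 dpos by (simp add: d2_def)
  have d3nn: "0 \<le> d3 m" for m using dpos by (simp add: d3_def sum_nonneg)
  have pw: "qs \<omega> (\<lambda>m. y m - g m) m \<le> 3 * (t m + d2 m + d3 m)" for m
  proof (cases "m = 0")
    case True
    then have "qs \<omega> (\<lambda>m. y m - g m) m = 0" using yZ gz by (simp add: qs_def Zlow_def)
    then show ?thesis using tnn[of m] d2nn[of m] d3nn[of m] by simp
  next
    case False
    then have wm: "\<omega> m > 0" "\<delta> \<le> \<omega> m" using pos dle by auto
    have "qs \<omega> (\<lambda>m. y m - g m) m = (cmod (gM m - g m + D2 m - D3 m))\<^sup>2 / \<omega> m"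
      by (simp add: qs_def yid)
    also have "\<dots> \<le> 3 * ((cmod (gM m - g m))\<^sup>2 + (cmod (D2 m))\<^sup>2 + (cmod (D3 m))\<^sup>2) / \<omega> m"
      using wm by (intro divide_right_mono cmod3) auto
    also have "\<dots> = 3 * ((cmod (gM m - g m))\<^sup>2 / \<omega> m + (cmod (D2 m))\<^sup>2 / \<omega> m + (cmod (D3 m))\<^sup>2 / \<omega> m)"
      by (simp add: add_divide_distrib)
    also have "\<dots> \<le> 3 * (t m + d2 m + d3 m)"
    proof -
      have 1: "(cmod (gM m - g m))\<^sup>2 / \<omega> m = t m"
        by (simp add: gM_def t_def qs_def norm_minus_commute)
      have 2: "(cmod (D2 m))\<^sup>2 / \<omega> m \<le> d2 m"
      proof (cases "m \<in> A")
        case True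
        have "(cmod (D2 m))\<^sup>2 / \<omega> m \<le> \<epsilon>1 / \<omega> m"
          using True q2[of m] wm by (simp add: D2_eq divide_right_mono)
        also have "\<dots> \<le> \<epsilon>1 / \<delta>" using wm e1 dpos by (intro divide_left_mono) auto
        finally show ?thesis using True by (simp add: d2_def)
      qed (simp add: D2_eq d2_def)
      have 3: "(cmod (D3 m))\<^sup>2 / \<omega> m \<le> d3 m"
      proof -
        define X where "X = real (card A) * (\<Sum>a\<in>A. (cmod (q a))\<^sup>2 / (real P)\<^sup>2 * (if m \<in> F a then 1 else 0))"
        have X0: "X \<ge> 0" by (simp add: X_def sum_nonneg)
        have "(cmod (D3 m))\<^sup>2 \<le> real (card A) * (\<Sum>a\<in>A. (cmod (q a / of_nat P * ind a m))\<^sup>2)"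
          unfolding D3_def by (rule cmod_sum_sq)
        also have "\<dots> = X"
          unfolding X_def
          by (intro arg_cong2[where f = "(*)"] refl sum.cong)
             (auto simp: ind_def norm_mult norm_divide power_divide)
        finally have "(cmod (D3 m))\<^sup>2 / \<omega> m \<le> X / \<omega> m" using wm by (intro divide_right_mono) auto
        also have "\<dots> \<le> X / \<delta>" using wm X0 dpos by (intro divide_left_mono) auto
        finally show ?thesis by (simp add: d3_def X_def)
      qed
      show ?thesis using 1 2 3 by simp
    qed
    finally show ?thesis .
  qed
  have d2s: "summable d2" "suminf d2 \<le> \<eta>/9"
  proof -
    show "summable d2" by (rule summable_finite[OF Afin]) (simp add: d2_def)
    have "suminf d2 = (\<Sum>m\<in>A. d2 m)" by (rule suminf_finite[OF Afin]) (simp add: d2_def)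
    also have "\<dots> = real (card A) * (\<epsilon>1 / \<delta>)" by (simp add: d2_def)
    also have "\<dots> \<le> real M * (\<epsilon>1 / \<delta>)" using cardA e1 dpos by (intro mult_right_mono) auto
    also have "\<epsilon>1 / \<delta> = \<eta> / (9 * (real M + 1))" using dpos by (simp add: \<epsilon>1_def)
    also have "real M * (\<eta> / (9 * (real M + 1))) \<le> \<eta> / 9" using eta by (simp add: field_simps)
    finally show "suminf d2 \<le> \<eta>/9" .
  qed
  have d3s: "summable d3" "suminf d3 \<le> C / real P"
  proof -
    have d3z: "\<And>m. m \<notin> U \<Longrightarrow> d3 m = 0" by (auto simp: d3_def U_def intro!: sum.neutral)
    show "summable d3" by (rule summable_finite[OF Ufin d3z])
    have "suminf d3 = (\<Sum>m\<in>U. d3 m)" by (rule suminf_finite[OF Ufin d3z])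
    also have "\<dots> = real (card A) / \<delta> * (\<Sum>m\<in>U. \<Sum>a\<in>A. (cmod (q a))\<^sup>2 / (real P)\<^sup>2 * (if m \<in> F a then 1 else 0))"
    proof -
      have "d3 m = real (card A) / \<delta> * (\<Sum>a\<in>A. (cmod (q a))\<^sup>2 / (real P)\<^sup>2 * (if m \<in> F a then 1 else 0))" for m
        by (simp add: d3_def)
      then have "(\<Sum>m\<in>U. d3 m) = (\<Sum>m\<in>U. real (card A) / \<delta> * (\<Sum>a\<in>A. (cmod (q a))\<^sup>2 / (real P)\<^sup>2 * (if m \<in> F a then 1 else 0)))"
        by (intro sum.cong refl)
      then show ?thesis by (simp only: sum_distrib_left[symmetric])
    qed
    also have "(\<Sum>m\<in>U. \<Sum>a\<in>A. (cmod (q a))\<^sup>2 / (real P)\<^sup>2 * (if m \<in> F a then 1 else 0))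
       = (\<Sum>a\<in>A. \<Sum>m\<in>U. (cmod (q a))\<^sup>2 / (real P)\<^sup>2 * (if m \<in> F a then 1 else 0))"
      by (rule sum.swap)
    also have "\<dots> = (\<Sum>a\<in>A. (cmod (q a))\<^sup>2 / (real P)\<^sup>2 * (\<Sum>m\<in>U. (if m \<in> F a then 1 else 0)))"
      by (simp only: sum_distrib_left)
    also have "\<dots> = (\<Sum>a\<in>A. (cmod (q a))\<^sup>2 / (real P)\<^sup>2 * real P)"
    proof -
      have "(\<Sum>m\<in>U. (if m \<in> F a then 1 else 0 :: real)) = real P" if "a \<in> A" for a
      proof -
        have "(\<Sum>m\<in>U. (if m \<in> F a then 1 else 0 :: real)) = (\<Sum>m\<in>{m\<in>U. m \<in> F a}. 1)"
          by (rule sum.inter_filter[OF Ufin, symmetric])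
        also have "{m\<in>U. m \<in> F a} = F a" using that by (auto simp: U_def)
        finally show ?thesis using F[OF that] by simp
      qed
      then show ?thesis by (intro sum.cong refl) auto
    qed
    also have "(\<Sum>a\<in>A. (cmod (q a))\<^sup>2 / (real P)\<^sup>2 * real P) = (\<Sum>a\<in>A. (cmod (q a))\<^sup>2) / real P"
    proof -
      have "(cmod (q a))\<^sup>2 / (real P)\<^sup>2 * real P = (cmod (q a))\<^sup>2 / real P" for a
        using P1 by (simp add: power2_eq_square)
      then show ?thesis by (simp add: sum_divide_distrib)
    qed
    also have "real (card A) / \<delta> * ((\<Sum>a\<in>A. (cmod (q a))\<^sup>2) / real P) = C / real P"
      by (simp add: C_def)
    finally show "suminf d3 \<le> C / real P" by simp
  qed
  have Gs: "summable (\<lambda>m. 3 * (t m + d2 m + d3 m))"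
    using ts d2s(1) d3s(1) by (intro summable_mult summable_add)
  have Gsum: "suminf (\<lambda>m. 3 * (t m + d2 m + d3 m)) = 3 * (suminf t + suminf d2 + suminf d3)"
  proof -
    have s12: "summable (\<lambda>m. t m + d2 m)" by (rule summable_add[OF ts d2s(1)])
    have e1: "suminf (\<lambda>m. t m + d2 m + d3 m) = suminf (\<lambda>m. t m + d2 m) + suminf d3"
      by (rule suminf_add[OF s12 d3s(1), symmetric])
    have e2: "suminf (\<lambda>m. t m + d2 m) = suminf t + suminf d2" by (rule suminf_add[OF ts d2s(1), symmetric])
    have e3: "suminf (\<lambda>m. 3 * (t m + d2 m + d3 m)) = 3 * suminf (\<lambda>m. t m + d2 m + d3 m)"
      by (rule suminf_mult[OF summable_add[OF s12 d3s(1)]])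
    show ?thesis using e1 e2 e3 by simp
  qed
  have nn: "0 \<le> qs \<omega> (\<lambda>m. y m - g m) m" for m
    by (rule qs_nonneg) (use yZ gz in \<open>simp add: Zlow_def\<close>)
  have S: "summable (qs \<omega> (\<lambda>m. y m - g m))"
    and Sle: "suminf (qs \<omega> (\<lambda>m. y m - g m)) \<le> suminf (\<lambda>m. 3 * (t m + d2 m + d3 m))"
    using cmp_sum[OF nn pw Gs] by auto
  have "suminf (qs \<omega> (\<lambda>m. y m - g m)) < \<eta>"
  proof -
    have d3l: "suminf d3 < \<eta>/9" using d3s(2) PC by (rule le_less_trans)
    have "3 * suminf t + 3 * suminf d2 + 3 * suminf d3 < \<eta>" using tsum d2s(2) d3l by linarith
    moreover have "3 * (suminf t + suminf d2 + suminf d3) = 3 * suminf t + 3 * suminf d2 + 3 * suminf d3"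
      by (simp add: distrib_left)
    ultimately have "3 * (suminf t + suminf d2 + suminf d3) < \<eta>" by linarith
    then show ?thesis using Sle[unfolded Gsum] by linarith
  qed
  moreover have "\<exists>B. \<forall>m\<ge>B. y m = 0" using ysupp by (rule exI)
  moreover have "\<exists>N. (Top ^^ N) y = (\<lambda>m. 0)" using ykill by (rule exI)
  ultimately show ?thesis using yZ yQ S by (intro exI[of _ y] conjI)
qed

end


lemma half_sum: "finite J \<Longrightarrow> (\<Sum>j\<in>J. (1/2::real) ^ j) \<le> 2"
proof -
  assume J: "finite J"
  have "(\<Sum>j\<in>J. (1/2::real) ^ j) \<le> suminf (\<lambda>j. (1/2::real) ^ j)"
    by (rule sum_le_suminf[OF summable_geometric J]) auto
  also have "\<dots> = 2" by (subst suminf_geometric) auto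
  finally show ?thesis .
qed

lemma quarter_sum: "finite J \<Longrightarrow> (\<Sum>j\<in>J. (1/4::real) ^ j) \<le> 4/3"
proof -
  assume J: "finite J"
  have "(\<Sum>j\<in>J. (1/4::real) ^ j) \<le> suminf (\<lambda>j. (1/4::real) ^ j)"
    by (rule sum_le_suminf[OF summable_geometric J]) auto
  also have "\<dots> = 4/3" by (subst suminf_geometric) auto
  finally show ?thesis .
qed

lemma quarter_tail:
  assumes J: "finite J" "J \<subseteq> {Suc k..}"
  shows "(\<Sum>j\<in>J. (1/4::real) ^ j) \<le> (1/4) ^ k / 3"
proof -
  have "(\<Sum>j\<in>J. (1/4::real) ^ j) = (\<Sum>j\<in>J. (1/4) ^ Suc k * (1/4) ^ (j - Suc k))"
  proof (rule sum.cong[OF refl])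
    fix j assume "j \<in> J"
    then have "j = Suc k + (j - Suc k)" using J by auto
    then show "(1/4::real) ^ j = (1/4) ^ Suc k * (1/4) ^ (j - Suc k)"
      by (metis power_add)
  qed
  also have "\<dots> = (1/4) ^ Suc k * (\<Sum>j\<in>J. (1/4::real) ^ (j - Suc k))"
    by (rule sum_distrib_left[symmetric])
  also have "(\<Sum>j\<in>J. (1/4::real) ^ (j - Suc k)) = (\<Sum>i\<in>(\<lambda>j. j - Suc k) ` J. (1/4::real) ^ i)"
  proof -
    have "inj_on (\<lambda>j. j - Suc k) J"
    proof (rule inj_onI)
      fix x y assume xy: "x \<in> J" "y \<in> J" "x - Suc k = y - Suc k"
      then have "x \<ge> Suc k" "y \<ge> Suc k" using J by auto
      then show "x = y" using xy(3) by arith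
    qed
    then show ?thesis by (simp add: sum.reindex)
  qed
  also have "\<dots> \<le> 4/3" using J by (intro quarter_sum) auto
  finally show ?thesis by (simp add: mult_left_mono)
qed

lemma wcs:
  assumes J: "finite J"
  shows "(cmod (\<Sum>j\<in>J. x j))\<^sup>2 \<le> 2 * (\<Sum>j\<in>J. 2 ^ j * (cmod (x j))\<^sup>2)"
proof -
  have "cmod (\<Sum>j\<in>J. x j) \<le> (\<Sum>j\<in>J. cmod (x j))" by (rule norm_sum)
  also have "\<dots> = (\<Sum>j\<in>J. sqrt ((1/2) ^ j) * (sqrt (2 ^ j) * cmod (x j)))"
  proof (rule sum.cong[OF refl])
    fix j
    have "(1/2::real) ^ j * 2 ^ j = 1" by (simp add: power_mult_distrib[symmetric])
    then have "sqrt ((1/2::real) ^ j) * sqrt (2 ^ j) = 1"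
      by (simp add: real_sqrt_mult[symmetric])
    then show "cmod (x j) = sqrt ((1/2) ^ j) * (sqrt (2 ^ j) * cmod (x j))"
      by (simp add: mult.assoc[symmetric])
  qed
  finally have 1: "cmod (\<Sum>j\<in>J. x j) \<le> (\<Sum>j\<in>J. sqrt ((1/2) ^ j) * (sqrt (2 ^ j) * cmod (x j)))" .
  have "(cmod (\<Sum>j\<in>J. x j))\<^sup>2 \<le> (\<Sum>j\<in>J. sqrt ((1/2) ^ j) * (sqrt (2 ^ j) * cmod (x j)))\<^sup>2"
    by (rule power_mono[OF 1]) simp
  also have "\<dots> \<le> (\<Sum>j\<in>J. (sqrt ((1/2) ^ j))\<^sup>2) * (\<Sum>j\<in>J. (sqrt (2 ^ j) * cmod (x j))\<^sup>2)"
    by (rule Cauchy_Schwarz_ineq_sum)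
  also have "\<dots> = (\<Sum>j\<in>J. (1/2) ^ j) * (\<Sum>j\<in>J. 2 ^ j * (cmod (x j))\<^sup>2)"
    by (simp add: power_mult_distrib)
  also have "\<dots> \<le> 2 * (\<Sum>j\<in>J. 2 ^ j * (cmod (x j))\<^sup>2)"
    by (rule mult_right_mono[OF half_sum[OF J]]) (simp add: sum_nonneg)
  finally show ?thesis .
qed

definition seqL :: "(rat \<times> rat) list \<Rightarrow> nat \<Rightarrow> complex" where
  "seqL L m = (if m < length L \<and> 3 \<le> m then Complex (of_rat (fst (L ! m))) (of_rat (snd (L ! m))) else 0)"

definition goodS :: "(nat \<Rightarrow> complex) \<Rightarrow> bool" where
  "goodS c \<longleftrightarrow> Zlow c \<and> (\<exists>B. \<forall>m\<ge>B. c m = 0) \<and> (\<exists>N. (Top ^^ N) c = (\<lambda>m. 0))"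

definition Yk :: "nat \<Rightarrow> nat \<Rightarrow> complex" where
  "Yk k = (if goodS (seqL (fst (from_nat k :: (rat \<times> rat) list \<times> nat)))
           then seqL (fst (from_nat k :: (rat \<times> rat) list \<times> nat)) else (\<lambda>m. 0))"

lemma Yk_good: "goodS (Yk k)"
proof -
  have "goodS (\<lambda>m. 0)" unfolding goodS_def Zlow_def by (auto intro: exI[of _ 0])
  then show ?thesis unfolding Yk_def by auto
qed

lemma Zlow_Top: "Zlow (Top c)" by (simp add: Zlow_def Top_def)

lemma Zlow_Topn: "Zlow c \<Longrightarrow> Zlow ((Top ^^ n) c)"
  by (induction n) (auto simp: Zlow_Top)

context wt begin

lemma Yk_dense:
  assumes g: "g \<in> Xw \<omega>" and eta: "\<eta> > 0"
  shows "\<exists>k\<ge>K0. summable (qs \<omega> (\<lambda>m. Yk k m - g m)) \<and> suminf (qs \<omega> (\<lambda>m. Yk k m - g m)) < \<eta>"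
proof -
  obtain y where yZ: "Zlow y" and yB: "\<exists>B. \<forall>m\<ge>B. y m = 0" and yN: "\<exists>N. (Top ^^ N) y = (\<lambda>m. 0)"
    and yQ: "\<forall>m. QI (y m)" and yS: "summable (qs \<omega> (\<lambda>m. y m - g m))"
    and yl: "suminf (qs \<omega> (\<lambda>m. y m - g m)) < \<eta>"
    using dens[OF g eta] by blast
  from yB obtain B where B: "\<forall>m\<ge>B. y m = 0" by blast
  define L where "L = map (\<lambda>m. (SOME r. of_rat r = Re (y m), SOME s. of_rat s = Im (y m))) [0..<B]"
  have seq: "seqL L = y"
  proof
    fix m
    show "seqL L m = y m"
    proof (cases "m < B \<and> 3 \<le> m")
      case True
      have r: "of_rat (SOME r. of_rat r = Re (y m)) = Re (y m)"
      proof -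
        have "Re (y m) \<in> \<rat>" using yQ by (simp add: QI_def)
        then have "\<exists>r. of_rat r = Re (y m)" by (auto elim: Rats_cases)
        then show ?thesis by (rule someI_ex)
      qed
      have s: "of_rat (SOME s. of_rat s = Im (y m)) = Im (y m)"
      proof -
        have "Im (y m) \<in> \<rat>" using yQ by (simp add: QI_def)
        then have "\<exists>r. of_rat r = Im (y m)" by (auto elim: Rats_cases)
        then show ?thesis by (rule someI_ex)
      qed
      show ?thesis using True r s by (simp add: seqL_def L_def complex_surj)
    next
      case False
      then have "y m = 0" using B yZ by (auto simp: Zlow_def)
      then show ?thesis using False by (auto simp: seqL_def L_def)
    qed
  qed
  have gy: "goodS y" using yZ yB yN by (simp add: goodS_def)
  have "inj (\<lambda>i::nat. to_nat (L, i))"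
    by (rule injI) (metis inj_to_nat injD prod.inject)
  then have "infinite (range (\<lambda>i::nat. to_nat (L, i)))" by (rule range_inj_infinite)
  then obtain k where k: "k \<ge> K0" "k \<in> range (\<lambda>i::nat. to_nat (L, i))"
    unfolding infinite_nat_iff_unbounded_le by blast
  then obtain i :: nat where ki: "k = to_nat (L, i)" by blast
  have "Yk k = y" unfolding Yk_def ki using seq gy by simp
  then show ?thesis using k yS yl by auto
qed

end

locale wt2 = wt +
  assumes lim: "\<And>k. k \<ge> 3 \<Longrightarrow> filterlim (\<lambda>n. \<omega> (k * 2 ^ n)) at_top sequentially"
begin

lemma Sdecay:
  assumes Z: "Zlow c" and B: "\<forall>m\<ge>B. c m = 0"
  shows "summable (qs \<omega> ((Sop ^^ d) c))"
    and "suminf (qs \<omega> ((Sop ^^ d) c)) = (\<Sum>n<B. (cmod (c n))\<^sup>2 / \<omega> (n * 2 ^ d))"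
    and "(\<lambda>d. suminf (qs \<omega> ((Sop ^^ d) c))) \<longlonglongrightarrow> 0"
proof -
  have supp: "(Sop ^^ d) c m = 0" if "m \<notin> (\<lambda>n. 2 ^ d * n) ` {..<B}" for m d
  proof (cases "2 ^ d dvd m")
    case True
    then obtain n where n: "m = 2 ^ d * n" by blast
    then have "n \<ge> B" using that by auto
    then show ?thesis using B by (simp add: Sop_pow n)
  qed (simp add: Sop_pow)
  have fin: "finite ((\<lambda>n. 2 ^ d * n) ` {..<B})" for d :: nat by simp
  have inj: "inj_on (\<lambda>n. 2 ^ d * n) {..<B}" for d :: nat by (auto simp: inj_on_def)
  have eq: "suminf (qs \<omega> ((Sop ^^ d) c)) = (\<Sum>n<B. (cmod (c n))\<^sup>2 / \<omega> (n * 2 ^ d))" for d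
  proof -
    have "suminf (qs \<omega> ((Sop ^^ d) c)) = (\<Sum>m\<in>(\<lambda>n. 2 ^ d * n) ` {..<B}. qs \<omega> ((Sop ^^ d) c) m)"
      by (rule fin_supp(2)[OF fin supp])
    also have "\<dots> = (\<Sum>n<B. qs \<omega> ((Sop ^^ d) c) (2 ^ d * n))"
      by (simp add: sum.reindex[OF inj])
    also have "\<dots> = (\<Sum>n<B. (cmod (c n))\<^sup>2 / \<omega> (n * 2 ^ d))"
      by (simp add: qs_def Sop_pow mult.commute)
    finally show ?thesis .
  qed
  show "summable (qs \<omega> ((Sop ^^ d) c))" by (rule fin_supp(1)[OF fin supp])
  show "suminf (qs \<omega> ((Sop ^^ d) c)) = (\<Sum>n<B. (cmod (c n))\<^sup>2 / \<omega> (n * 2 ^ d))" by (rule eq)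
  have "(\<lambda>d. \<Sum>n<B. (cmod (c n))\<^sup>2 / \<omega> (n * 2 ^ d)) \<longlonglongrightarrow> 0"
  proof (rule tendsto_null_sum)
    fix n assume "n \<in> {..<B}"
    show "(\<lambda>d. (cmod (c n))\<^sup>2 / \<omega> (n * 2 ^ d)) \<longlonglongrightarrow> 0"
    proof (cases "n < 3")
      case True then show ?thesis using Z by (simp add: Zlow_def)
    next
      case False
      have "(\<lambda>d. inverse (\<omega> (n * 2 ^ d))) \<longlonglongrightarrow> 0"
        by (rule tendsto_inverse_0_at_top[OF lim]) (use False in simp)
      then have "(\<lambda>d. (cmod (c n))\<^sup>2 * inverse (\<omega> (n * 2 ^ d))) \<longlonglongrightarrow> (cmod (c n))\<^sup>2 * 0"
        by (intro tendsto_mult tendsto_const)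
      then show ?thesis by (simp add: divide_inverse)
    qed
  qed
  then show "(\<lambda>d. suminf (qs \<omega> ((Sop ^^ d) c))) \<longlonglongrightarrow> 0" by (simp add: eq)
qed

lemma Yk_decay:
  "\<exists>D. \<forall>d\<ge>D. summable (qs \<omega> ((Sop ^^ d) (Yk k))) \<and> suminf (qs \<omega> ((Sop ^^ d) (Yk k))) \<le> (1/8) ^ k"
proof -
  from Yk_good[of k] obtain B where Z: "Zlow (Yk k)" and B: "\<forall>m\<ge>B. Yk k m = 0"
    by (auto simp: goodS_def)
  have "\<forall>\<^sub>F d in sequentially. suminf (qs \<omega> ((Sop ^^ d) (Yk k))) < (1/8) ^ k"
    by (rule order_tendstoD(2)[OF Sdecay(3)[OF Z B]]) simp
  then obtain D where "\<forall>d\<ge>D. suminf (qs \<omega> ((Sop ^^ d) (Yk k))) < (1/8) ^ k"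
    unfolding eventually_sequentially by blast
  then show ?thesis using Sdecay(1)[OF Z B] by (intro exI[of _ D]) (auto intro: less_imp_le)
qed

end



primrec nseq :: "(nat \<Rightarrow> nat) \<Rightarrow> (nat \<Rightarrow> nat) \<Rightarrow> nat \<Rightarrow> nat" where
  "nseq N D 0 = D 0"
| "nseq N D (Suc k) = nseq N D k + N k + D (Suc k) + 1"

lemma nseq_D: "D k \<le> nseq N D k" by (cases k) auto

lemma nseq_ge: "k \<le> nseq N D k" by (induction k) auto

lemma nseq_gap: "j < k \<Longrightarrow> nseq N D j + N j + D k \<le> nseq N D k"
proof (induction k)
  case 0 then show ?case by simp
next
  case (Suc k)
  show ?case
  proof (cases "j = k")
    case True then show ?thesis by simp
  next
    case False
    then have "j < k" using Suc.prems by simp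
    then have "nseq N D j + N j \<le> nseq N D k" using Suc.IH by simp
    then show ?thesis by simp
  qed
qed

context wt begin

lemma partial_bound:
  assumes cZ: "Zlow c" and ceq: "\<And>m. m < M \<Longrightarrow> c m = (\<Sum>j<K. X j m)"
    and XZ: "\<And>j. Zlow (X j)" and Xs: "\<And>j. summable (qs \<omega> (X j))"
    and Xe: "\<And>j. suminf (qs \<omega> (X j)) \<le> e j"
  shows "(\<Sum>m<M. qs \<omega> c m) \<le> 2 * (\<Sum>j<K. 2 ^ j * e j)"
proof -
  have Xnn: "0 \<le> qs \<omega> (X j) m" for j m using XZ[of j] by (intro qs_nonneg) (simp add: Zlow_def)
  have pw: "qs \<omega> c m \<le> 2 * (\<Sum>j<K. 2 ^ j * qs \<omega> (X j) m)" if m: "m < M" for m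
  proof (cases "m = 0")
    case True
    then have "qs \<omega> c m = 0" using cZ by (simp add: qs_def Zlow_def)
    then show ?thesis using Xnn by (simp add: sum_nonneg)
  next
    case False
    then have wm: "\<omega> m > 0" using pos by simp
    have "qs \<omega> c m = (cmod (\<Sum>j<K. X j m))\<^sup>2 / \<omega> m" by (simp add: qs_def ceq[OF m])
    also have "\<dots> \<le> (2 * (\<Sum>j<K. 2 ^ j * (cmod (X j m))\<^sup>2)) / \<omega> m"
      using wm by (intro divide_right_mono wcs) auto
    also have "\<dots> = 2 * ((\<Sum>j<K. 2 ^ j * (cmod (X j m))\<^sup>2) / \<omega> m)" by simp
    also have "\<dots> = 2 * (\<Sum>j<K. 2 ^ j * (cmod (X j m))\<^sup>2 / \<omega> m)"
      by (simp only: sum_divide_distrib)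
    also have "\<dots> = 2 * (\<Sum>j<K. 2 ^ j * qs \<omega> (X j) m)" by (simp add: qs_def)
    finally show ?thesis .
  qed
  have "(\<Sum>m<M. qs \<omega> c m) \<le> (\<Sum>m<M. 2 * (\<Sum>j<K. 2 ^ j * qs \<omega> (X j) m))"
    by (rule sum_mono) (rule pw, simp)
  also have "\<dots> = 2 * (\<Sum>m<M. \<Sum>j<K. 2 ^ j * qs \<omega> (X j) m)"
    by (rule sum_distrib_left[symmetric])
  also have "\<dots> = 2 * (\<Sum>j<K. \<Sum>m<M. 2 ^ j * qs \<omega> (X j) m)"
    by (simp only: sum.swap[of _ "{..<M}" "{..<K}"])
  also have "\<dots> = 2 * (\<Sum>j<K. 2 ^ j * (\<Sum>m<M. qs \<omega> (X j) m))"
    by (simp only: sum_distrib_left)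
  also have "\<dots> \<le> 2 * (\<Sum>j<K. 2 ^ j * e j)"
  proof -
    have "(\<Sum>m<M. qs \<omega> (X j) m) \<le> e j" for j
    proof -
      have "(\<Sum>m<M. qs \<omega> (X j) m) \<le> suminf (qs \<omega> (X j))"
        by (rule sum_le_suminf[OF Xs]) (auto intro: Xnn)
      then show ?thesis using Xe[of j] by linarith
    qed
    then show ?thesis by (intro mult_left_mono sum_mono) auto
  qed
  finally show ?thesis .
qed

end

context wt2 begin

definition Nk :: "nat \<Rightarrow> nat" where
  "Nk k = (SOME N. (Top ^^ N) (Yk k) = (\<lambda>m. 0))"

definition Dk :: "nat \<Rightarrow> nat" where
  "Dk k = (SOME D. \<forall>d\<ge>D. summable (qs \<omega> ((Sop ^^ d) (Yk k))) \<and> suminf (qs \<omega> ((Sop ^^ d) (Yk k))) \<le> (1/8) ^ k)"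

definition nn :: "nat \<Rightarrow> nat" where "nn = nseq Nk Dk"

definition Pc :: "nat \<Rightarrow> nat \<Rightarrow> complex" where "Pc j = (Sop ^^ nn j) (Yk j)"

definition fH :: "nat \<Rightarrow> complex" where "fH m = (\<Sum>j<m. Pc j m)"

lemma Nk: "(Top ^^ Nk k) (Yk k) = (\<lambda>m. 0)"
proof -
  have "\<exists>N. (Top ^^ N) (Yk k) = (\<lambda>m. 0)" using Yk_good[of k] by (simp add: goodS_def)
  then show ?thesis unfolding Nk_def by (rule someI_ex)
qed

lemma Dk: "d \<ge> Dk k \<Longrightarrow> summable (qs \<omega> ((Sop ^^ d) (Yk k))) \<and> suminf (qs \<omega> ((Sop ^^ d) (Yk k))) \<le> (1/8) ^ k"
proof -
  assume d: "d \<ge> Dk k"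
  have "\<forall>d\<ge>Dk k. summable (qs \<omega> ((Sop ^^ d) (Yk k))) \<and> suminf (qs \<omega> ((Sop ^^ d) (Yk k))) \<le> (1/8) ^ k"
    unfolding Dk_def by (rule someI_ex[OF Yk_decay])
  then show ?thesis using d by blast
qed

lemma YZ: "Zlow (Yk k)" using Yk_good[of k] by (simp add: goodS_def)

lemma PcZ: "Zlow (Pc j)" unfolding Pc_def by (rule Zlow_Sop_pow[OF YZ])

lemma Pc_supp: "Pc j m \<noteq> 0 \<Longrightarrow> j < m"
proof -
  assume ne: "Pc j m \<noteq> 0"
  then have dv: "2 ^ nn j dvd m" and ne2: "Yk j (m div 2 ^ nn j) \<noteq> 0"
    by (auto simp: Pc_def Sop_pow split: if_splits)
  then have "m div 2 ^ nn j \<ge> 3" using YZ[of j] by (auto simp: Zlow_def not_le[symmetric])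
  then have "2 ^ nn j * 3 \<le> 2 ^ nn j * (m div 2 ^ nn j)" by simp
  also have "\<dots> = m" using dv by simp
  finally have "2 ^ nn j \<le> m" by simp
  moreover have "nn j < 2 ^ nn j" by (rule less_exp)
  moreover have "j \<le> nn j" unfolding nn_def by (rule nseq_ge)
  ultimately show "j < m" by linarith
qed

lemma fH_eq: "m \<le> K \<Longrightarrow> fH m = (\<Sum>j<K. Pc j m)"
proof -
  assume mK: "m \<le> K"
  have "(\<Sum>j<K. Pc j m) = (\<Sum>j<m. Pc j m)"
  proof (rule sum.mono_neutral_right)
    show "\<forall>j\<in>{..<K} - {..<m}. Pc j m = 0" using Pc_supp by fastforce
  qed (use mK in auto)
  then show ?thesis by (simp add: fH_def)
qed

lemma fHZ: "Zlow fH"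
  unfolding Zlow_def fH_def using PcZ by (auto simp: Zlow_def intro!: sum.neutral)

lemma Tf:
  fixes k M m :: nat
  assumes m: "m < M"
  defines "K \<equiv> 2 ^ nn k * M + k + 1"
  shows "(Top ^^ nn k) fH m - Yk k m
     = (\<Sum>j<K. (if k < j then (Sop ^^ (nn j - nn k)) (Yk j) else (\<lambda>m. 0)) m)"
proof -
  define Q where "Q j = (if k < j then (Sop ^^ (nn j - nn k)) (Yk j) else (\<lambda>m. 0))" for j
  have "(Top ^^ nn k) fH m = (Top ^^ nn k) (\<lambda>i. \<Sum>j<K. Pc j i) m"
  proof (rule Topn_local)
    fix i assume "i \<le> 2 ^ nn k * m"
    also have "\<dots> \<le> 2 ^ nn k * M" using m by simp
    also have "\<dots> \<le> K" by (simp add: K_def)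
    finally show "fH i = (\<Sum>j<K. Pc j i)" by (rule fH_eq)
  qed
  also have "\<dots> = (\<Sum>j<K. (Top ^^ nn k) (Pc j) m)"
    using fun_cong[OF Topn_sum[of "nn k" "\<lambda>j i. Pc j i" "{..<K}"], of m] by simp
  also have "\<dots> = (\<Sum>j<K. Q j m + (if j = k then Yk k m else 0))"
  proof (rule sum.cong[OF refl])
    fix j
    show "(Top ^^ nn k) (Pc j) m = Q j m + (if j = k then Yk k m else 0)"
    proof (cases j k rule: linorder_cases)
      case less
      then have g: "nn j + Nk j \<le> nn k" using nseq_gap[OF less, of Nk Dk] by (simp add: nn_def)
      have "(Top ^^ nn k) (Pc j) = (Top ^^ (nn k - nn j)) (Yk j)"
        unfolding Pc_def using g by (intro Topn_Sopn_ge YZ) simp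
      also have "nn k - nn j = (nn k - nn j - Nk j) + Nk j" using g by simp
      also have "(Top ^^ ((nn k - nn j - Nk j) + Nk j)) (Yk j) = (\<lambda>m. 0)"
        by (simp only: funpow_add comp_apply Nk Topn_zero)
      finally show ?thesis using less by (simp add: Q_def)
    next
      case equal
      then show ?thesis by (simp add: Q_def Pc_def Topn_Sopn_ge[OF YZ])
    next
      case greater
      then have "nn k \<le> nn j" using nseq_gap[OF greater, of Nk Dk] by (simp add: nn_def)
      then show ?thesis using greater by (simp add: Q_def Pc_def Topn_Sopn_le[OF YZ])
    qed
  qed
  also have "\<dots> = (\<Sum>j<K. Q j m) + Yk k m"
    by (simp add: sum.distrib K_def)
  finally show ?thesis by (simp add: Q_def)
qed

end



context wt2 begin

lemma Pc_sum: "summable (qs \<omega> (Pc j)) \<and> suminf (qs \<omega> (Pc j)) \<le> (1/8) ^ j"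
  unfolding Pc_def by (rule Dk) (simp add: nn_def nseq_D)

lemma two_eighth: "(2::real) ^ j * (1/8) ^ j = (1/4) ^ j"
  by (simp add: power_mult_distrib[symmetric])

lemma fH_Xw: "fH \<in> Xw \<omega>"
proof -
  have nn: "0 \<le> qs \<omega> fH m" for m using fHZ by (intro qs_nonneg) (simp add: Zlow_def)
  have b: "(\<Sum>m<M. qs \<omega> fH m) \<le> 8/3" for M
  proof -
    have "(\<Sum>m<M. qs \<omega> fH m) \<le> 2 * (\<Sum>j<M. 2 ^ j * (1/8) ^ j)"
      by (rule partial_bound[OF fHZ fH_eq PcZ]) (use Pc_sum in auto)
    also have "\<dots> = 2 * (\<Sum>j<M. (1/4::real) ^ j)" by (simp only: two_eighth)
    also have "\<dots> \<le> 2 * (4/3)" using quarter_sum[of "{..<M}"] by simp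
    finally show ?thesis by simp
  qed
  have "summable (qs \<omega> fH)" by (rule summableI_nonneg_bounded[OF nn b])
  then show ?thesis using fHZ by (simp add: Xw_def qs_def Zlow_def)
qed

lemma R_bound:
  "summable (qs \<omega> (\<lambda>m. (Top ^^ nn k) fH m - Yk k m))
   \<and> suminf (qs \<omega> (\<lambda>m. (Top ^^ nn k) fH m - Yk k m)) \<le> (1/4) ^ k"
proof -
  define R where "R = (\<lambda>m. (Top ^^ nn k) fH m - Yk k m)"
  have RZ: "Zlow R" using Zlow_Topn[OF fHZ, of "nn k"] YZ[of k] by (simp add: R_def Zlow_def)
  have nn0: "0 \<le> qs \<omega> R m" for m using RZ by (intro qs_nonneg) (simp add: Zlow_def)
  define Q where "Q j = (if k < j then (Sop ^^ (nn j - nn k)) (Yk j) else (\<lambda>m. 0))" for j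
  define e where "e j = (if k < j then (1/8::real) ^ j else 0)" for j
  have QZ: "Zlow (Q j)" for j by (simp add: Q_def Zlow_Sop_pow YZ) (simp add: Zlow_def)
  have Qs: "summable (qs \<omega> (Q j)) \<and> suminf (qs \<omega> (Q j)) \<le> e j" for j
  proof (cases "k < j")
    case True
    have "nn k + Nk k + Dk j \<le> nn j" using nseq_gap[OF True, of Nk Dk] by (simp add: nn_def)
    then have "nn j - nn k \<ge> Dk j" by simp
    then show ?thesis using Dk[of j "nn j - nn k"] True by (simp add: Q_def e_def)
  next
    case False
    then have "qs \<omega> (Q j) = (\<lambda>m. 0)" by (simp add: Q_def qs_def fun_eq_iff)
    then show ?thesis using False by (simp add: e_def)
  qed
  have b: "(\<Sum>m<M. qs \<omega> R m) \<le> (1/4) ^ k" for M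
  proof -
    define K where "K = 2 ^ nn k * M + k + 1"
    have "(\<Sum>m<M. qs \<omega> R m) \<le> 2 * (\<Sum>j<K. 2 ^ j * e j)"
    proof (rule partial_bound[OF RZ _ QZ])
      show "R m = (\<Sum>j<K. Q j m)" if "m < M" for m
        using Tf[OF that, of k] by (simp add: R_def Q_def K_def)
    qed (use Qs in auto)
    also have "(\<Sum>j<K. 2 ^ j * e j) = (\<Sum>j\<in>{j\<in>{..<K}. k < j}. (1/4::real) ^ j)"
    proof -
      have "(\<Sum>j<K. 2 ^ j * e j) = (\<Sum>j<K. if k < j then (1/4::real) ^ j else 0)"
        by (rule sum.cong) (auto simp: e_def two_eighth)
      also have "\<dots> = (\<Sum>j\<in>{j\<in>{..<K}. k < j}. (1/4::real) ^ j)"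
        by (rule sum.inter_filter[symmetric]) simp
      finally show ?thesis .
    qed
    also have "(\<Sum>j\<in>{j\<in>{..<K}. k < j}. (1/4::real) ^ j) \<le> (1/4) ^ k / 3"
      by (rule quarter_tail) auto
    finally have h: "(\<Sum>m<M. qs \<omega> R m) \<le> 2 * ((1/4) ^ k / 3)" by simp
    have "(0::real) \<le> (1/4) ^ k" by simp
    then show ?thesis using h by linarith
  qed
  have "summable (qs \<omega> R)" by (rule summableI_nonneg_bounded[OF nn0 b])
  moreover have "suminf (qs \<omega> R) \<le> (1/4) ^ k" by (rule suminf_le_const[OF calculation b])
  ultimately show ?thesis by (simp add: R_def)
qed

theorem hyp: "hypercyclic_Top \<omega>"
  unfolding hypercyclic_Top_def
proof (intro bexI[OF _ fH_Xw] ballI allI impI)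
  fix g and \<epsilon> :: real
  assume g: "g \<in> Xw \<omega>" and e: "\<epsilon> > 0"
  define \<eta> where "\<eta> = \<epsilon>\<^sup>2"
  have eta: "\<eta> > 0" using e by (simp add: \<eta>_def)
  obtain K0 where K0: "(1/4::real) ^ K0 < \<eta>/4" using real_arch_pow_inv[of "\<eta>/4" "1/4"] eta by auto
  obtain k where k: "k \<ge> K0" and Ys: "summable (qs \<omega> (\<lambda>m. Yk k m - g m))"
    and Yl: "suminf (qs \<omega> (\<lambda>m. Yk k m - g m)) < \<eta>/4"
    using Yk_dense[OF g, of "\<eta>/4" K0] eta by auto
  define R where "R = (\<lambda>m. (Top ^^ nn k) fH m - Yk k m)"
  have Rs: "summable (qs \<omega> R)" and Rl: "suminf (qs \<omega> R) \<le> (1/4) ^ k"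
    using R_bound[of k] by (simp_all add: R_def)
  have "(1/4::real) ^ k \<le> (1/4) ^ K0" using k by (intro power_decreasing) auto
  then have Rl2: "suminf (qs \<omega> R) < \<eta>/4" using Rl K0 by linarith
  have gZ: "Zlow g" using g by (simp add: Xw_def Zlow_def)
  define Df where "Df = (\<lambda>m. (Top ^^ nn k) fH m - g m)"
  have DfZ: "Zlow Df" using Zlow_Topn[OF fHZ, of "nn k"] gZ by (simp add: Df_def Zlow_def)
  have RZ: "Zlow R" using Zlow_Topn[OF fHZ, of "nn k"] YZ[of k] by (simp add: R_def Zlow_def)
  have YgZ: "Zlow (\<lambda>m. Yk k m - g m)" using YZ[of k] gZ by (simp add: Zlow_def)
  have pw: "qs \<omega> Df m \<le> 2 * (qs \<omega> R m + qs \<omega> (\<lambda>m. Yk k m - g m) m)" for m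
  proof (cases "m = 0")
    case True
    have "qs \<omega> Df m = 0" using DfZ True by (simp add: qs_def Zlow_def)
    moreover have "0 \<le> qs \<omega> R m" "0 \<le> qs \<omega> (\<lambda>m. Yk k m - g m) m"
      using RZ YgZ by (auto intro!: qs_nonneg simp: Zlow_def)
    ultimately show ?thesis by simp
  next
    case False
    then have wm: "\<omega> m > 0" using pos by simp
    have "Df m = R m + (Yk k m - g m)" by (simp add: Df_def R_def)
    then have "qs \<omega> Df m = (cmod (R m + (Yk k m - g m)))\<^sup>2 / \<omega> m" by (simp add: qs_def)
    also have "\<dots> \<le> 2 * ((cmod (R m))\<^sup>2 + (cmod (Yk k m - g m))\<^sup>2) / \<omega> m"
      using wm by (intro divide_right_mono cmod2) auto
    also have "\<dots> = 2 * (qs \<omega> R m + qs \<omega> (\<lambda>m. Yk k m - g m) m)"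
      by (simp add: qs_def add_divide_distrib)
    finally show ?thesis .
  qed
  have nnD: "0 \<le> qs \<omega> Df m" for m using DfZ by (intro qs_nonneg) (simp add: Zlow_def)
  have Gs: "summable (\<lambda>m. 2 * (qs \<omega> R m + qs \<omega> (\<lambda>m. Yk k m - g m) m))"
    by (intro summable_mult summable_add Rs Ys)
  have G: "suminf (\<lambda>m. 2 * (qs \<omega> R m + qs \<omega> (\<lambda>m. Yk k m - g m) m))
      = 2 * (suminf (qs \<omega> R) + suminf (qs \<omega> (\<lambda>m. Yk k m - g m)))"
  proof -
    have "suminf (\<lambda>m. 2 * (qs \<omega> R m + qs \<omega> (\<lambda>m. Yk k m - g m) m))
        = 2 * suminf (\<lambda>m. qs \<omega> R m + qs \<omega> (\<lambda>m. Yk k m - g m) m)"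
      by (rule suminf_mult[OF summable_add[OF Rs Ys]])
    also have "suminf (\<lambda>m. qs \<omega> R m + qs \<omega> (\<lambda>m. Yk k m - g m) m)
        = suminf (qs \<omega> R) + suminf (qs \<omega> (\<lambda>m. Yk k m - g m))"
      by (rule suminf_add[OF Rs Ys, symmetric])
    finally show ?thesis .
  qed
  have Dle: "suminf (qs \<omega> Df) \<le> suminf (\<lambda>m. 2 * (qs \<omega> R m + qs \<omega> (\<lambda>m. Yk k m - g m) m))"
    using cmp_sum(2)[OF nnD pw Gs] .
  have "2 * suminf (qs \<omega> R) + 2 * suminf (qs \<omega> (\<lambda>m. Yk k m - g m)) < \<eta>"
    using Rl2 Yl by linarith
  then have "suminf (qs \<omega> Df) < \<eta>" using Dle G by (simp add: distrib_left)
  then have "sqrt (suminf (qs \<omega> Df)) < sqrt \<eta>" by (rule real_sqrt_less_mono)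
  also have "sqrt \<eta> = \<epsilon>" using e by (simp add: \<eta>_def)
  finally have "sqrt (suminf (qs \<omega> Df)) < \<epsilon>" .
  moreover have "wnorm \<omega> ((Top ^^ nn k) fH - g) = sqrt (suminf (qs \<omega> Df))"
    by (simp add: wnorm_def qs_def Df_def fun_diff_def)
  ultimately have "wnorm \<omega> ((Top ^^ nn k) fH - g) < \<epsilon>" by simp
  then show "\<exists>n. wnorm \<omega> ((Top ^^ n) fH - g) < \<epsilon>" by (rule exI)
qed

end

lemma main:
  assumes w: "weight \<omega>" and b: "bounded_below_weight \<omega>"
    and l: "\<forall>k\<ge>3. filterlim (\<lambda>n. \<omega> (k * 2 ^ n)) at_top sequentially"
  shows "hypercyclic_Top \<omega>"
proof -
  obtain \<delta> where d: "\<delta> > 0" "\<forall>n\<ge>1. \<delta> \<le> \<omega> n" using b by (auto simp: bounded_below_weight_def)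
  interpret wt2 \<omega> \<delta>
    by unfold_locales (use w d l in \<open>auto simp: weight_def\<close>)
  show ?thesis by (rule hyp)
qed

lemma w0_lim: "k \<ge> 3 \<Longrightarrow> filterlim (\<lambda>n. \<omega>\<^sub>0 (k * 2 ^ n)) at_top sequentially"
proof -
  assume k: "k \<ge> 3"
  show ?thesis unfolding filterlim_at_top
  proof
    fix Z :: real
    obtain N :: nat where N: "Z * pi < real N" using reals_Archimedean2 by blast
    show "\<forall>\<^sub>F n in sequentially. Z \<le> \<omega>\<^sub>0 (k * 2 ^ n)"
      unfolding eventually_sequentially
    proof (intro exI[of _ N] allI impI)
      fix n assume n: "N \<le> n"
      have "n < 2 ^ n" by (rule less_exp)
      also have "(2::nat) ^ n \<le> k * 2 ^ n" using k by simp
      finally have "n \<le> k * 2 ^ n" by simp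
      then have "real n \<le> real (k * 2 ^ n)" by (simp only: of_nat_le_iff)
      then have "Z * pi < real (k * 2 ^ n) + 1" using N n by linarith
      then show "Z \<le> \<omega>\<^sub>0 (k * 2 ^ n)"
        by (simp add: \<omega>\<^sub>0_def pos_le_divide_eq less_imp_le)
    qed
  qed
qed

theorem theorem3p4:
  shows "(\<forall>\<omega>. weight \<omega> \<and> bounded_below_weight \<omega>
            \<and> (\<forall>k\<ge>3. filterlim (\<lambda>n. \<omega> (k * 2 ^ n)) at_top sequentially)
            \<and> Top_bounded \<omega>
          \<longrightarrow> hypercyclic_Top \<omega>)
         \<and> hypercyclic_Top \<omega>\<^sub>0"
proof
  show "\<forall>\<omega>. weight \<omega> \<and> bounded_below_weight \<omega>
            \<and> (\<forall>k\<ge>3. filterlim (\<lambda>n. \<omega> (k * 2 ^ n)) at_top sequentially)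
            \<and> Top_bounded \<omega>
          \<longrightarrow> hypercyclic_Top \<omega>"
    using main by blast
  have w: "weight \<omega>\<^sub>0" by (simp add: weight_def \<omega>\<^sub>0_def)
  have b: "bounded_below_weight \<omega>\<^sub>0"
    unfolding bounded_below_weight_def
    by (rule exI[of _ "1/pi"]) (auto simp: \<omega>\<^sub>0_def divide_right_mono)
  show "hypercyclic_Top \<omega>\<^sub>0" by (rule main[OF w b]) (use w0_lim in auto)
qed



end
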